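(* Let $X = [X_1 \; X_2] \in \mathbb{R}^{N\times P}$ with $X_1 \in \mathbb{R}^{N\times P_1}$, $X_2\in\mathbb{R}^{N\times P_2}$, $P = P_1+P_2$, and suppose the $N$-vector of ones $\mathbf{1}$ lies in the column span of $X_1$. Consider the hierarchical normal linear regression $$\mathbf{Y}\mid \boldsymbol\beta,\Phi \sim N(X_1\boldsymbol\beta_1 + X_2\boldsymbol\beta_2,\Phi),\quad \boldsymbol\beta_1\sim N(0,C),\quad \boldsymbol\beta_2\mid\Sigma\sim N(0,\Sigma),\quad \Sigma\sim f(\Sigma),\ \Phi\sim f(\Phi),$$ where $\Sigma\in\mathbb{R}^{P_2\times P_2}$ is positive definite and $\Phi = \mathrm{diag}(\phi_1^2,\dots,\phi_N^2)$ is diagonal and positive definite; in the Bayesian setting the prior densities are such that the posterior is proper. Let $$W = XVX'\Phi^{-1},\qquad V = \left(X'\Phi^{-1}X + \begin{bmatrix} C^{-1} & 0\\ 0 & \Sigma^{-1}\end{bmatrix}\right)^{-1},$$ with $C^{-1}$ taken to be the zero matrix, and write $w_{ij}$ for the $(i,j)$ entry of $W$. For $i\in\{1,\dots,N\}$, let $x_i'$ be the $i$-th row of $X$, let $B_i = \{j\in\{1,\dots,N\}: x_j = x_i,\ \phi_j=\phi_i\}$ and $L_i = \{1,\dots,N\}\setminus B_i$, and define the shrinkage factor $b_{iB_i} = \sum_{j\in B_i} w_{ij}$ and the pooling factor $b_{iL_i} = \sum_{j\in L_i} w_{ij}$. Then for every $i$, $0 < b_{iB_i}\le 1$ and $0\le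 b_{iL_i} < 1$.
   Context: $W$ is defined for given values of $\Sigma$ and $\Phi$, and $V$ is assumed to exist (the displayed matrix is invertible). $B_i$ is the "borrower cluster" of observation $i$ (rows with identical covariates and identical noise variance) and $L_i$ the set of "lenders". *)

theory Defs
  imports "HOL-Analysis.Analysis"
begin

definition pos_def_mat :: "real^'n^'n \<Rightarrow> bool" where
  "pos_def_mat A \<longleftrightarrow> transpose A = A \<and> (\<forall>v. v \<noteq> 0 \<longrightarrow> v \<bullet> (A *v v) > 0)"

definition diag_pos_mat :: "real^'n^'n \<Rightarrow> bool" where
  "diag_pos_mat A \<longleftrightarrow> (\<forall>i j. i \<noteq> j \<longrightarrow> A $ i $ j = 0) \<and> (\<forall>i. A $ i $ i > 0)"

definition hcat :: "real^'p1^'n \<Rightarrow> real^'p2^'n \<Rightarrow> real^('p1 + 'p2)^'n" where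
  "hcat X1 X2 = (\<chi> i j. case j of Inl a \<Rightarrow> X1 $ i $ a | Inr b \<Rightarrow> X2 $ i $ b)"

text \<open>Block-diagonal prior precision diag(C^{-1}, Sig^{-1}) with C^{-1} = 0.\<close>
definition prior_prec :: "real^'p2^'p2 \<Rightarrow> real^('p1::finite + 'p2::finite)^('p1 + 'p2)" where
  "prior_prec Sig = (\<chi> a b. case (a, b) of
       (Inr p, Inr q) \<Rightarrow> matrix_inv Sig $ p $ q
     | _ \<Rightarrow> 0)"

definition Vmat :: "real^'p^'n \<Rightarrow> real^'n^'n \<Rightarrow> real^'p^'p \<Rightarrow> real^'p^'p" where
  "Vmat X Phi D = matrix_inv (transpose X ** matrix_inv Phi ** X + D)"

definition Wmat :: "real^'p^'n \<Rightarrow> real^'n^'n \<Rightarrow> real^'p^'p \<Rightarrow> real^'n^'n" where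
  "Wmat X Phi D = X ** Vmat X Phi D ** transpose X ** matrix_inv Phi"

definition borrowers :: "real^'p^'n \<Rightarrow> real^'n^'n \<Rightarrow> 'n \<Rightarrow> 'n set" where
  "borrowers X Phi i = {j. X $ j = X $ i \<and> Phi $ j $ j = Phi $ i $ i}"

definition lenders :: "real^'p^'n \<Rightarrow> real^'n^'n \<Rightarrow> 'n \<Rightarrow> 'n set" where
  "lenders X Phi i = UNIV - borrowers X Phi i"

end

theory Submission
  imports Defs
begin

lemma minv:
  fixes A :: "'a::semiring_1^'n^'m"
  assumes "invertible A"
  shows "A ** matrix_inv A = mat 1" "matrix_inv A ** A = mat 1"
  using someI_ex[OF assms[unfolded invertible_def]] unfolding matrix_inv_def by auto

lemma diag_inv:
  fixes Phi :: "real^'n::finite^'n"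
  assumes "diag_pos_mat Phi"
  shows "matrix_inv Phi = (\<chi> i j. if i = j then 1 / Phi$i$i else 0)"
proof -
  let ?Q = "(\<chi> i j. if i = j then 1 / Phi$i$i else 0) :: real^'n^'n"
  have d: "\<And>i j. i \<noteq> j \<Longrightarrow> Phi$i$j = 0" "\<And>i. Phi$i$i > 0" using assms unfolding diag_pos_mat_def by auto
  have d3: "\<And>i. Phi$i$i \<noteq> 0" using d(2) by (metis less_irrefl)
  have 1: "Phi ** ?Q = mat 1"
  proof -
    have "(Phi ** ?Q)$i$j = mat 1 $i$j" for i j
    proof -
      have "(Phi ** ?Q)$i$j = (\<Sum>k\<in>UNIV. Phi$i$k * ?Q$k$j)" by (simp add: matrix_matrix_mult_def)
      also have "\<dots> = Phi$i$j * ?Q$j$j"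
        by (rule sum.mono_neutral_right[of UNIV "{j}", simplified]) (auto simp: d d3)
      also have "\<dots> = mat 1 $i$j" by (auto simp: mat_def d d3)
      finally show ?thesis .
    qed
    then show ?thesis by (simp add: vec_eq_iff)
  qed
  have 2: "?Q ** Phi = mat 1"
  proof -
    have "(?Q ** Phi)$i$j = mat 1 $i$j" for i j
    proof -
      have "(?Q ** Phi)$i$j = (\<Sum>k\<in>UNIV. ?Q$i$k * Phi$k$j)" by (simp add: matrix_matrix_mult_def)
      also have "\<dots> = ?Q$i$i * Phi$i$j"
        by (rule sum.mono_neutral_right[of UNIV "{i}", simplified]) (auto simp: d d3)
      also have "\<dots> = mat 1 $i$j" by (auto simp: mat_def d d3)
      finally show ?thesis .
    qed
    then show ?thesis by (simp add: vec_eq_iff)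
  qed
  have inv: "invertible Phi" using 1 2 unfolding invertible_def by blast
  have "matrix_inv Phi = matrix_inv Phi ** (Phi ** ?Q)" by (simp add: 1)
  also have "\<dots> = ?Q" by (simp add: matrix_mul_assoc minv[OF inv])
  finally show ?thesis .
qed

lemma sum_UNIV_Plus:
  "sum f (UNIV::('a::finite + 'b::finite) set) = sum (f \<circ> Inl) UNIV + sum (f \<circ> Inr) UNIV"
  by (metis UNIV_Plus_UNIV sum.Plus finite)

lemma ifmult: "(if P then a else 0) * b = (if P then a * b else (0::real))" by simp

lemma Wentry:
  fixes X :: "real^'p::finite^'n::finite"
  assumes "diag_pos_mat Phi"
  shows "Wmat X Phi D $ i $ j = (X$i \<bullet> (Vmat X Phi D *v X$j)) / Phi$j$j"
proof -
  have "Wmat X Phi D $ i $ j = (\<Sum>k\<in>UNIV. (X ** Vmat X Phi D ** transpose X)$i$k * matrix_inv Phi$k$j)"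
    by (simp add: Wmat_def matrix_matrix_mult_def)
  also have "\<dots> = (X ** Vmat X Phi D ** transpose X)$i$j / Phi$j$j"
    by (rule trans[OF sum.mono_neutral_right[of UNIV "{j}"]]) (auto simp: diag_inv[OF assms])
  also have "(X ** Vmat X Phi D ** transpose X)$i$j = X$i \<bullet> (Vmat X Phi D *v X$j)"
    by (simp add: matrix_matrix_mult_def matrix_vector_mult_def inner_vec_def transpose_def
         sum_distrib_left sum_distrib_right mult.assoc mult.left_commute) (rule sum.swap)
  finally show ?thesis .
qed

lemma quad:
  fixes X :: "real^'p::finite^'n::finite"
  assumes "diag_pos_mat Phi"
  shows "y \<bullet> ((transpose X ** matrix_inv Phi ** X + D) *v y) = (\<Sum>k\<in>UNIV. (X$k \<bullet> y)^2 / Phi$k$k) + y \<bullet> (D *v y)"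
proof -
  have "y \<bullet> ((transpose X ** matrix_inv Phi ** X) *v y) = (X *v y) \<bullet> (matrix_inv Phi *v (X *v y))"
  proof -
    have "y \<bullet> (transpose X *v z) = (X *v y) \<bullet> z" for z
      by (metis transpose_matrix_vector dot_lmul_matrix inner_commute)
    then show ?thesis by (simp only: matrix_vector_mul_assoc[symmetric])
  qed
  also have "\<dots> = (\<Sum>k\<in>UNIV. (X$k \<bullet> y)^2 / Phi$k$k)"
  proof -
    have "(matrix_inv Phi *v z) $ k = z$k / Phi$k$k" for z :: "real^'n" and k
      by (simp add: diag_inv[OF assms] matrix_vector_mult_def ifmult)
    moreover have "(X *v y)$k = X$k \<bullet> y" for k by (simp add: matrix_vector_mult_def inner_vec_def mult.commute)
    ultimately show ?thesis by (simp add: inner_vec_def power2_eq_square)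
  qed
  finally show ?thesis by (simp add: matrix_vector_mult_add_rdistrib inner_add_right)
qed

lemma main_gen:
  fixes X :: "real^'p::finite^'n::finite" and D :: "real^'p^'p" and Phi :: "real^'n^'n"
  assumes Phi: "diag_pos_mat Phi"
    and Dnn: "\<And>y. 0 \<le> y \<bullet> (D *v y)"
    and Dz: "\<And>y. y \<bullet> (D *v y) = 0 \<Longrightarrow> D *v y = 0"
    and e1: "X *v e = vec 1" and e2: "D *v e = 0"
    and inv: "invertible (transpose X ** matrix_inv Phi ** X + D)"
  shows "0 < (\<Sum>j\<in>borrowers X Phi i. Wmat X Phi D $ i $ j)
       \<and> (\<Sum>j\<in>borrowers X Phi i. Wmat X Phi D $ i $ j) \<le> 1
       \<and> 0 \<le> (\<Sum>j\<in>lenders X Phi i. Wmat X Phi D $ i $ j)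
       \<and> (\<Sum>j\<in>lenders X Phi i. Wmat X Phi D $ i $ j) < 1"
proof -
  define M where "M = transpose X ** matrix_inv Phi ** X + D"
  define V where "V = Vmat X Phi D"
  define W where "W = Wmat X Phi D"
  define B where "B = borrowers X Phi i"
  define L where "L = lenders X Phi i"
  have VM: "V ** M = mat 1" and MV: "M ** V = mat 1"
    using minv[OF inv] by (auto simp: V_def Vmat_def M_def)
  have ph: "\<And>k. Phi$k$k > 0" using Phi unfolding diag_pos_mat_def by auto
  have Xk: "(X *v y)$k = X$k \<bullet> y" for y k by (simp add: matrix_vector_mult_def inner_vec_def mult.commute)
  have rowsum: "(\<Sum>j\<in>UNIV. W$i$j) = 1"
  proof -
    have "(transpose X ** matrix_inv Phi ** X) *v e = M *v e"
      by (simp add: M_def matrix_vector_mult_add_rdistrib e2)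
    have "W *v vec 1 = W *v (X *v e)" using e1 by simp
    also have "\<dots> = X *v (V *v ((transpose X ** matrix_inv Phi ** X) *v e))"
      by (simp add: W_def Wmat_def V_def matrix_vector_mul_assoc matrix_mul_assoc)
    also have "\<dots> = X *v e"
      using \<open>(transpose X ** matrix_inv Phi ** X) *v e = M *v e\<close>
      by (simp add: matrix_vector_mul_assoc VM)
    finally have "W *v vec 1 = vec 1" using e1 by simp
    then have "(W *v vec 1)$i = 1" by simp
    then show ?thesis by (simp add: matrix_vector_mult_def)
  qed
  have BL: "(\<Sum>j\<in>B. W$i$j) + (\<Sum>j\<in>L. W$i$j) = 1"
  proof -
    have "L = UNIV - B" by (simp add: L_def B_def lenders_def)
    then show ?thesis using rowsum sum.subset_diff[of B UNIV "\<lambda>j. W$i$j"] by simp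
  qed
  define y where "y = V *v X$i"
  define q where "q = X$i \<bullet> y"
  have My: "M *v y = X$i" by (simp add: y_def matrix_vector_mul_assoc MV)
  have Wij: "j \<in> B \<Longrightarrow> W$i$j = q / Phi$i$i" for j
    by (simp add: W_def Wentry[OF Phi] B_def borrowers_def q_def y_def V_def)
  have iB: "i \<in> B" by (simp add: B_def borrowers_def)
  have cB: "card B \<ge> 1" using iB by (metis One_nat_def Suc_leI card_gt_0_iff empty_iff finite)
  have bB: "(\<Sum>j\<in>B. W$i$j) = card B * q / Phi$i$i" using Wij by simp
  define S where "S = (\<Sum>k\<in>UNIV. (X$k \<bullet> y)^2 / Phi$k$k)"
  have qS: "q = S + y \<bullet> (D *v y)"
  proof -
    have "q = y \<bullet> (M *v y)" by (simp add: My q_def inner_commute)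
    then show ?thesis unfolding S_def M_def using quad[OF Phi] by simp
  qed
  have Snn: "0 \<le> (X$k \<bullet> y)^2 / Phi$k$k" for k using ph[of k] by simp
  have SB: "S \<ge> (\<Sum>k\<in>B. (X$k \<bullet> y)^2 / Phi$k$k)"
    unfolding S_def by (rule sum_mono2) (auto simp: Snn)
  have SB2: "(\<Sum>k\<in>B. (X$k \<bullet> y)^2 / Phi$k$k) = card B * q^2 / Phi$i$i"
    by (simp add: B_def borrowers_def q_def)
  have "q \<noteq> 0"
  proof
    assume q0: "q = 0"
    have S0: "S = 0" and D0: "y \<bullet> (D *v y) = 0" 
    proof -
      have "S \<ge> 0" unfolding S_def by (rule sum_nonneg) (simp add: Snn)
      then show "S = 0" "y \<bullet> (D *v y) = 0" using qS q0 Dnn[of y] by linarith+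
    qed
    have "\<forall>k\<in>UNIV. (X$k \<bullet> y)^2 / Phi$k$k = 0"
      using S0 unfolding S_def by (subst sum_nonneg_eq_0_iff[symmetric]) (auto simp: Snn)
    then have "X$k \<bullet> y = 0" for k using ph[of k] by (metis UNIV_I divide_eq_0_iff less_irrefl power_eq_0_iff)
    then have Xy: "X *v y = 0" by (simp add: vec_eq_iff Xk)
    have "M *v y = 0"
      by (simp add: M_def matrix_vector_mult_add_rdistrib Dz[OF D0] matrix_vector_mul_assoc[symmetric] Xy)
    then have "X$i = 0" using My by simp
    then have "(X *v e)$i = 0" by (simp add: Xk)
    then show False using e1 by simp
  qed
  have qpos: "q > 0" using qS SB SB2 Dnn[of y] \<open>q \<noteq> 0\<close> ph[of i] cB
    by (smt (verit) divide_nonneg_pos of_nat_0_le_iff zero_le_power2 mult_nonneg_nonneg)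
  have "card B * q^2 / Phi$i$i \<le> q" using qS SB SB2 Dnn[of y] by simp
  then have "card B * q / Phi$i$i \<le> 1" using qpos ph[of i]
    by (simp add: power2_eq_square field_simps)
  moreover have "card B * q / Phi$i$i > 0" using qpos ph[of i] cB by simp
  ultimately show ?thesis using BL bB unfolding W_def B_def L_def by linarith
qed

lemma pd_inv:
  fixes Sig :: "real^'m::finite^'m"
  assumes "pos_def_mat Sig"
  shows "v \<noteq> 0 \<Longrightarrow> 0 < v \<bullet> (matrix_inv Sig *v v)"
proof -
  have pd: "\<And>w. w \<noteq> 0 \<Longrightarrow> 0 < w \<bullet> (Sig *v w)" using assms unfolding pos_def_mat_def by auto
  have "inj ((*v) Sig)"
  proof (rule injI)
    fix a b assume "Sig *v a = Sig *v b"
    then have "Sig *v (a - b) = 0" by (simp add: matrix_vector_mult_diff_distrib)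
    then show "a = b" using pd[of "a - b"] by fastforce
  qed
  then have "invertible Sig" using matrix_left_invertible_injective invertible_left_inverse by blast
  note mi = minv[OF this]
  assume v: "v \<noteq> 0"
  define w where "w = matrix_inv Sig *v v"
  have Sw: "Sig *v w = v" by (simp add: w_def matrix_vector_mul_assoc mi)
  then have "w \<noteq> 0" using v by auto
  then have "0 < w \<bullet> (Sig *v w)" by (rule pd)
  moreover have "w \<bullet> (Sig *v w) = v \<bullet> (matrix_inv Sig *v v)" unfolding Sw by (simp add: w_def inner_commute)
  ultimately show ?thesis by simp
qed

lemma span_ex:
  fixes X1 :: "real^'p::finite^'n::finite"
  assumes "v \<in> span (columns X1)"
  shows "\<exists>c. X1 *v c = v"
proof -
  have "subspace (range ((*v) X1))"
    unfolding subspace_def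
  proof (intro conjI ballI allI)
    show "0 \<in> range ((*v) X1)" by (metis matrix_vector_mult_0_right rangeI)
  next
    fix x y assume "x \<in> range ((*v) X1)" "y \<in> range ((*v) X1)"
    then obtain a b where "x = X1 *v a" "y = X1 *v b" by auto
    then have "x + y = X1 *v (a + b)" by (simp add: matrix_vector_right_distrib)
    then show "x + y \<in> range ((*v) X1)" by simp
  next
    fix c :: real and x assume "x \<in> range ((*v) X1)"
    then obtain a where "x = X1 *v a" by auto
    then have "c *\<^sub>R x = X1 *v (c *\<^sub>R a)" by (simp add: matrix_vector_mult_scaleR)
    then show "c *\<^sub>R x \<in> range ((*v) X1)" by simp
  qed
  moreover have "columns X1 \<subseteq> range ((*v) X1)"
    by (auto simp: columns_def simp flip: matrix_vector_mult_basis)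
  ultimately have "span (columns X1) \<subseteq> range ((*v) X1)" using span_minimal by blast
  then show ?thesis using assms by auto
qed

lemma Dvec:
  fixes Sig :: "real^'p2::finite^'p2"
  shows "(prior_prec Sig :: real^('p1::finite + 'p2)^('p1 + 'p2)) *v y
     = (\<chi> a. case a of Inl _ \<Rightarrow> 0 | Inr p \<Rightarrow> (matrix_inv Sig *v (\<chi> q. y $ Inr q)) $ p)"
  by (simp add: vec_eq_iff matrix_vector_mult_def prior_prec_def sum_UNIV_Plus o_def split: sum.split)

lemma Dquad:
  fixes Sig :: "real^'p2::finite^'p2"
  shows "y \<bullet> ((prior_prec Sig :: real^('p1::finite + 'p2)^('p1 + 'p2)) *v y)
     = (\<chi> q. y $ Inr q) \<bullet> (matrix_inv Sig *v (\<chi> q. y $ Inr q))"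
  by (simp add: Dvec inner_vec_def sum_UNIV_Plus o_def)

lemma Xe:
  fixes X1 :: "real^'p1::finite^'n::finite" and X2 :: "real^'p2::finite^'n"
  shows "hcat X1 X2 *v (\<chi> a. case a of Inl a \<Rightarrow> c$a | Inr _ \<Rightarrow> 0) = X1 *v c"
  by (simp add: vec_eq_iff matrix_vector_mult_def hcat_def sum_UNIV_Plus o_def)

theorem theorem2:
  fixes X1 :: "real^'p1::finite^'n::finite"
    and X2 :: "real^'p2::finite^'n"
    and Sig :: "real^'p2^'p2"
    and Phi :: "real^'n^'n"
  assumes ones: "(vec 1 :: real^'n) \<in> span (columns X1)"
    and Sigma_pd: "pos_def_mat Sig"
    and Phi_pd: "diag_pos_mat Phi"
    and V_exists: "invertible (transpose (hcat X1 X2) ** matrix_inv Phi ** hcat X1 X2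
                      + (prior_prec Sig :: real^('p1 + 'p2)^('p1 + 'p2)))"
  shows "\<forall>i. let X = hcat X1 X2; W = Wmat X Phi (prior_prec Sig :: real^('p1 + 'p2)^('p1 + 'p2));
               bB = (\<Sum>j\<in>borrowers X Phi i. W $ i $ j);
               bL = (\<Sum>j\<in>lenders X Phi i. W $ i $ j)
             in 0 < bB \<and> bB \<le> 1 \<and> 0 \<le> bL \<and> bL < 1"
proof
  fix i
  obtain c where c: "X1 *v c = vec 1" using span_ex[OF ones] by blast
  define e :: "real^('p1 + 'p2)" where "e = (\<chi> a. case a of Inl a \<Rightarrow> c$a | Inr _ \<Rightarrow> 0)"
  have e1: "hcat X1 X2 *v e = vec 1" using c by (simp add: e_def Xe)
  have e2: "(prior_prec Sig :: real^('p1 + 'p2)^('p1 + 'p2)) *v e = 0"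
  proof -
    have "(\<chi> q. e $ Inr q) = (0::real^'p2)" by (simp add: e_def vec_eq_iff)
    then show ?thesis unfolding Dvec by (simp only: matrix_vector_mult_0_right) (simp add: vec_eq_iff split: sum.split)
  qed
  have Dnn: "0 \<le> y \<bullet> ((prior_prec Sig :: real^('p1 + 'p2)^('p1 + 'p2)) *v y)" for y
    unfolding Dquad using pd_inv[OF Sigma_pd] by (metis inner_zero_left order.strict_implies_order order_refl)
  have Dz: "(prior_prec Sig :: real^('p1 + 'p2)^('p1 + 'p2)) *v y = 0"
    if "y \<bullet> ((prior_prec Sig :: real^('p1 + 'p2)^('p1 + 'p2)) *v y) = 0" for y
  proof -
    have "(\<chi> q. y $ Inr q) = (0::real^'p2)"
      using that unfolding Dquad using pd_inv[OF Sigma_pd] by (metis less_irrefl)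
    then show ?thesis unfolding Dvec by (simp only: matrix_vector_mult_0_right) (simp add: vec_eq_iff split: sum.split)
  qed
  show "let X = hcat X1 X2; W = Wmat X Phi (prior_prec Sig :: real^('p1 + 'p2)^('p1 + 'p2));
               bB = (\<Sum>j\<in>borrowers X Phi i. W $ i $ j);
               bL = (\<Sum>j\<in>lenders X Phi i. W $ i $ j)
             in 0 < bB \<and> bB \<le> 1 \<and> 0 \<le> bL \<and> bL < 1"
    unfolding Let_def by (rule main_gen[OF Phi_pd Dnn Dz e1 e2 V_exists])
qed

end
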